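(* Let $\phi(z)\in\mathbb{R}[z]$ be a cubic polynomial with positive lead coefficient $a>0$ and at least two distinct fixed points. Denote its fixed points by $\gamma_1,\gamma_2,\gamma_3\in\mathbb{R}$ with $\gamma_1\leq\gamma_2\leq\gamma_3$. Then $\mathfrak{K}_\infty\cap\mathbb{R}\subseteq[\gamma_1,\gamma_3]$, and $$\phi^{-1}([\gamma_1,\gamma_3])\subseteq[\gamma_1,\gamma_1+a^{-1/2}]\cup[\gamma_2-a^{-1/2},\gamma_2+a^{-1/2}]\cup[\gamma_3-a^{-1/2},\gamma_3].$$
   Context: The (archimedean) filled Julia set of $\phi$ is $\mathfrak{K}_\infty=\{x\in\mathbb{C}:\{|\phi^n(x)|:n\ge0\}\text{ is bounded}\}$, where $\phi^n$ is the $n$-th iterate of $\phi$. Fixed points are listed with multiplicity as roots of $\phi(z)-z$; here $\phi^{-1}([\gamma_1,\gamma_3])$ denotes the set of real $x$ with $\phi(x)\in[\gamma_1,\gamma_3]$. *)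

theory Defs
  imports "HOL-Computational_Algebra.Polynomial" "HOL-Analysis.Analysis"
begin

definition filled_julia :: "complex poly \<Rightarrow> complex set" where
  "filled_julia p = {x. bounded (range (\<lambda>n. ((poly p) ^^ n) x))}"

end

theory Submission
  imports Defs
begin

lemma poly_of_real_map: "poly (map_poly complex_of_real p) (complex_of_real x) = complex_of_real (poly p x)"
  by (induction p) (auto simp: map_poly_pCons)

lemma orbit_real:
  fixes p :: "real poly"
  shows "((poly (map_poly complex_of_real p)) ^^ n) (complex_of_real x) = complex_of_real (((poly p) ^^ n) x)"
  by (induction n) (auto simp: poly_of_real_map)

lemma unbounded_orbit:
  fixes g :: "real \<Rightarrow> real" and x c :: real
  assumes c: "c > 0" and h: "\<And>n. \<bar>(g ^^ n) x\<bar> \<ge> \<bar>x\<bar>*0 + (x * s + real n * c)"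
    and s: "s = 1 \<or> s = -1"
  shows "\<not> bounded (range (\<lambda>n. complex_of_real ((g ^^ n) x)))"
proof
  assume "bounded (range (\<lambda>n. complex_of_real ((g ^^ n) x)))"
  then obtain B where B: "\<And>n. norm (complex_of_real ((g ^^ n) x)) \<le> B"
    unfolding bounded_iff by blast
  obtain n :: nat where n: "(B - x * s) / c < real n" using reals_Archimedean2 by blast
  have "B - x * s < real n * c" using n c by (simp add: field_simps)
  moreover have "\<bar>(g ^^ n) x\<bar> \<le> B" using B[of n] by simp
  ultimately show False using h[of n] by linarith
qed

theorem lemma4p10:
  fixes \<phi> :: "real poly" and a \<gamma>1 \<gamma>2 \<gamma>3 :: real
  assumes deg: "degree \<phi> = 3"
    and lc: "lead_coeff \<phi> = a" and apos: "a > 0"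
    and fixpts: "\<phi> - [:0, 1:] = smult a ([:-\<gamma>1, 1:] * [:-\<gamma>2, 1:] * [:-\<gamma>3, 1:])"
    and ord: "\<gamma>1 \<le> \<gamma>2" "\<gamma>2 \<le> \<gamma>3"
    and two_distinct: "\<gamma>1 < \<gamma>3"
  shows "{x::real. complex_of_real x \<in> filled_julia (map_poly complex_of_real \<phi>)} \<subseteq> {\<gamma>1..\<gamma>3} \<and>
         {x::real. poly \<phi> x \<in> {\<gamma>1..\<gamma>3}} \<subseteq>
           {\<gamma>1..\<gamma>1 + 1 / sqrt a} \<union> {\<gamma>2 - 1 / sqrt a..\<gamma>2 + 1 / sqrt a} \<union> {\<gamma>3 - 1 / sqrt a..\<gamma>3}"
proof -
  define f where "f y = a*((y-\<gamma>1)*(y-\<gamma>2)*(y-\<gamma>3))" for y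
  have pe: "poly \<phi> y = y + f y" for y
  proof -
    have "poly (\<phi> - [:0, 1:]) y = poly (smult a ([:-\<gamma>1, 1:] * [:-\<gamma>2, 1:] * [:-\<gamma>3, 1:])) y"
      using fixpts by simp
    thus ?thesis by (simp add: f_def algebra_simps)
  qed
  have fmono_hi: "f x \<le> f y" if "\<gamma>3 \<le> x" "x \<le> y" for x y
  proof -
    have "(x-\<gamma>1)*(x-\<gamma>2) \<le> (y-\<gamma>1)*(y-\<gamma>2)"
      using that ord by (intro mult_mono) auto
    hence "(x-\<gamma>1)*(x-\<gamma>2)*(x-\<gamma>3) \<le> (y-\<gamma>1)*(y-\<gamma>2)*(y-\<gamma>3)"
      using that ord by (intro mult_mono) auto
    thus ?thesis unfolding f_def using apos by simp
  qed
  have fmono_lo: "f y \<le> f x" if "x \<le> \<gamma>1" "y \<le> x" for x y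
  proof -
    have "(\<gamma>1-x)*(\<gamma>2-x) \<le> (\<gamma>1-y)*(\<gamma>2-y)"
      using that ord by (intro mult_mono) auto
    hence "(\<gamma>1-x)*(\<gamma>2-x)*(\<gamma>3-x) \<le> (\<gamma>1-y)*(\<gamma>2-y)*(\<gamma>3-y)"
      using that ord by (intro mult_mono) auto
    hence "(y-\<gamma>1)*(y-\<gamma>2)*(y-\<gamma>3) \<le> (x-\<gamma>1)*(x-\<gamma>2)*(x-\<gamma>3)"
      by (simp add: algebra_simps)
    thus ?thesis unfolding f_def using apos by simp
  qed
  have part1: "x \<in> {\<gamma>1..\<gamma>3}" if J: "complex_of_real x \<in> filled_julia (map_poly complex_of_real \<phi>)" for x
  proof (rule ccontr)
    assume nx: "x \<notin> {\<gamma>1..\<gamma>3}"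
    have bd: "bounded (range (\<lambda>n. complex_of_real (((poly \<phi>) ^^ n) x)))"
      using J unfolding filled_julia_def by (simp add: orbit_real)
    show False
    proof (cases "x > \<gamma>3")
      case True
      have fpos: "f x > 0" unfolding f_def using True ord apos by simp
      have h: "((poly \<phi>) ^^ n) x \<ge> x + real n * f x" for n
      proof (induction n)
        case (Suc n)
        let ?y = "((poly \<phi>) ^^ n) x"
        have "?y \<ge> x" using Suc fpos by (smt (verit) of_nat_0_le_iff mult_nonneg_nonneg)
        hence "f x \<le> f ?y" using True by (intro fmono_hi) auto
        moreover have "((poly \<phi>) ^^ Suc n) x = ?y + f ?y" using pe[of ?y] by simp
        ultimately show ?case using Suc by (simp add: algebra_simps)
      qed simp
      have "\<bar>((poly \<phi>) ^^ n) x\<bar> \<ge> \<bar>x\<bar>*0 + (x * 1 + real n * f x)" for n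
        using h[of n] by simp
      from unbounded_orbit[OF fpos this] bd show False by simp
    next
      case False
      hence xl: "x < \<gamma>1" using nx by auto
      have fneg: "f x < 0" unfolding f_def using xl ord apos
        by (simp add: mult_pos_neg mult_neg_neg mult_neg_pos)
      have h: "((poly \<phi>) ^^ n) x \<le> x + real n * f x" for n
      proof (induction n)
        case (Suc n)
        let ?y = "((poly \<phi>) ^^ n) x"
        have "?y \<le> x" using Suc fneg by (smt (verit) of_nat_0_le_iff mult_nonneg_nonpos)
        hence "f ?y \<le> f x" using xl by (intro fmono_lo) auto
        moreover have "((poly \<phi>) ^^ Suc n) x = ?y + f ?y" using pe[of ?y] by simp
        ultimately show ?case using Suc by (simp add: algebra_simps)
      qed simp
      have "\<bar>((poly \<phi>) ^^ n) x\<bar> \<ge> \<bar>x\<bar>*0 + (x * -1 + real n * (- f x))" for n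
        using h[of n] by simp
      from unbounded_orbit[OF _ this] fneg bd show False by simp
    qed
  qed
  define d where "d = 1 / sqrt a"
  have dpos: "d > 0" using apos by (simp add: d_def)
  have ad: "a * (d*d) = 1" using apos by (simp add: d_def)
  have part2: "x \<in> {\<gamma>1..\<gamma>1 + d} \<union> {\<gamma>2 - d..\<gamma>2 + d} \<union> {\<gamma>3 - d..\<gamma>3}"
    if P: "poly \<phi> x \<in> {\<gamma>1..\<gamma>3}" for x
  proof -
    have x1: "x \<ge> \<gamma>1"
    proof (rule ccontr)
      assume "\<not> x \<ge> \<gamma>1"
      hence "f x < 0" unfolding f_def using ord apos
        by (simp add: mult_pos_neg mult_neg_neg mult_neg_pos)
      thus False using P pe[of x] \<open>\<not> x \<ge> \<gamma>1\<close> by simp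
    qed
    have x3: "x \<le> \<gamma>3"
    proof (rule ccontr)
      assume "\<not> x \<le> \<gamma>3"
      hence "f x > 0" unfolding f_def using ord apos by simp
      thus False using P pe[of x] \<open>\<not> x \<le> \<gamma>3\<close> by simp
    qed
    show ?thesis
    proof (rule ccontr)
      assume "\<not> ?thesis"
      hence A: "x > \<gamma>1 + d" "x < \<gamma>3 - d" "x < \<gamma>2 - d \<or> x > \<gamma>2 + d" using x1 x3 by auto
      from A(3) show False
      proof
        assume B: "x < \<gamma>2 - d"
        have "d*d < (x-\<gamma>1)*(\<gamma>2-x)" using A B dpos by (intro mult_strict_mono) auto
        hence "a*(d*d)*(\<gamma>3-x) < a*((x-\<gamma>1)*(\<gamma>2-x))*(\<gamma>3-x)"
          using apos A dpos by (intro mult_strict_right_mono) auto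
        hence "\<gamma>3 - x < f x" using ad by (simp add: f_def algebra_simps)
        thus False using P pe[of x] by simp
      next
        assume B: "x > \<gamma>2 + d"
        have "d*d < (x-\<gamma>2)*(\<gamma>3-x)" using A B dpos by (intro mult_strict_mono) auto
        hence "a*(d*d)*(x-\<gamma>1) < a*((x-\<gamma>2)*(\<gamma>3-x))*(x-\<gamma>1)"
          using apos A dpos by (intro mult_strict_right_mono) auto
        hence "x - \<gamma>1 < - f x" using ad by (simp add: f_def algebra_simps)
        thus False using P pe[of x] by simp
      qed
    qed
  qed
  show ?thesis using part1 part2 unfolding d_def by blast
qed

end
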